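(* (1) If $G:[0,1]\to[0,\infty)$ is continuous, increasing, positive on $(0,1]$ and satisfies $\liminf_{x\to0^+}x\log(1/G(x))>0$ and $\int_0^d\log\log(1/G(x))\,dx<\infty$ for some $d>0$, then the sequence $M_n=2\int_0^1G(1-r)r^{2n+1}\,dr$, $n\ge0$, is admissible. (2) Conversely, if $\{M_n\}_{n\ge0}$ is an admissible sequence, then there exists a continuous increasing function $G$ on $[0,1]$ with $G(0)=0$, satisfying $\liminf_{x\to0^+}x\log(1/G(x))>0$ and $\int_0^d\log\log(1/G(x))\,dx<\infty$ for some $d>0$, such that $P_G(2n+1)\le M_n$ for all sufficiently large $n$, where $P_G(x)=\int_0^1G(1-r)r^x\,dr$.
   Context: A decreasing sequence of positive numbers $\{M_n\}_{n\ge0}$ with $M_n\to0$ is admissible if: (1) $2\log M_n\le\log M_{n+1}+\log M_{n-1}$ for all sufficiently large $n$; (2) there is $d>0$ with $M_n\le e^{-d\sqrt n}$ for all sufficiently large $n$; (3) $\sum_{n\ge0}\frac{\log(1/M_n)}{1+n^2}<\infty$. *)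

theory Defs
  imports "HOL-Analysis.Analysis"
begin

definition admissible :: "(nat \<Rightarrow> real) \<Rightarrow> bool" where
  "admissible M \<longleftrightarrow>
     (\<forall>n. M n > 0) \<and> decseq M \<and> M \<longlonglongrightarrow> 0 \<and>
     (\<forall>\<^sub>F n in sequentially. 2 * ln (M n) \<le> ln (M (n + 1)) + ln (M (n - 1))) \<and>
     (\<exists>d>0. \<forall>\<^sub>F n in sequentially. M n \<le> exp (- d * sqrt (real n))) \<and>
     summable (\<lambda>n. ln (1 / M n) / (1 + (real n)\<^sup>2))"

definition liminf_cond :: "(real \<Rightarrow> real) \<Rightarrow> bool" where
  "liminf_cond G \<longleftrightarrow> Liminf (at_right 0) (\<lambda>x. ereal (x * ln (1 / G x))) > 0"

definition loglog_cond :: "(real \<Rightarrow> real) \<Rightarrow> bool" where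
  "loglog_cond G \<longleftrightarrow> (\<exists>d>0. (\<forall>x\<in>{0<..d}. G x < 1) \<and>
      set_integrable lborel {0<..d} (\<lambda>x. ln (ln (1 / G x))))"

definition P_G :: "(real \<Rightarrow> real) \<Rightarrow> real \<Rightarrow> real" where
  "P_G G x = integral {0..1} (\<lambda>r. G (1 - r) * r powr x)"

end

theory Submission
  imports Defs
begin


lemma summable_n_half: "summable (\<lambda>n. real n * (1/2::real)^n)"
proof -
  have "summable (\<lambda>n. diffs (\<lambda>_. 1::real) n * (1/2::real)^n)"
    by (rule termdiff_converges[where K=1]) (auto intro!: summable_geometric)
  hence "summable (\<lambda>n. real (Suc n) * (1/2::real)^n)" by (simp add: diffs_def)
  hence "summable (\<lambda>n. 2 * (real (Suc n) * (1/2::real)^(Suc n)))" by simp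
  hence "summable (\<lambda>n. real (Suc n) * (1/2::real)^(Suc n))"
    by (subst (asm) summable_cmult_iff) simp
  thus ?thesis using summable_Suc_iff[of "\<lambda>n. real n * (1/2::real)^n"] by simp
qed

lemma geom_subset:
  fixes A :: "nat set"
  assumes "finite A" "\<And>k. k \<in> A \<Longrightarrow> (1/2::real)^k \<le> x" "0 \<le> x"
  shows "(\<Sum>k\<in>A. (1/2::real)^k) \<le> 2 * x"
proof (cases "A = {}")
  case True thus ?thesis using assms by simp
next
  case False
  define k0 where "k0 = Min A"
  have k0A: "k0 \<in> A" using False assms(1) k0_def by simp
  have ge: "\<And>k. k \<in> A \<Longrightarrow> k0 \<le> k" using assms(1) k0_def by simp
  have "(\<Sum>k\<in>A. (1/2::real)^k) = (\<Sum>k\<in>A. (1/2)^k0 * (1/2::real)^(k - k0))"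
    by (rule sum.cong) (auto simp: ge power_add[symmetric])
  also have "\<dots> = (1/2)^k0 * (\<Sum>k\<in>A. (1/2::real)^(k - k0))" by (simp add: sum_distrib_left)
  also have "(\<Sum>k\<in>A. (1/2::real)^(k - k0)) = (\<Sum>i\<in>(\<lambda>k. k - k0) ` A. (1/2::real)^i)"
  proof -
    have "inj_on (\<lambda>k. k - k0) A" by (auto simp: inj_on_def) (metis ge le_add_diff_inverse)
    thus ?thesis by (simp add: sum.reindex)
  qed
  also have "\<dots> \<le> (\<Sum>i. (1/2::real)^i)"
    by (rule sum_le_suminf) (auto intro: summable_geometric assms(1))
  also have "\<dots> = 2" using suminf_geometric[of "1/2::real"] by simp
  finally show ?thesis using assms(2)[OF k0A] by (simp add: mult.commute)
qed


lemma count1: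
  fixes b :: "nat \<Rightarrow> real"
  assumes b0: "\<And>k. 0 \<le> b k" and sb: "summable (\<lambda>k. (1/2)^k * b k)"
  defines "kk \<equiv> \<lambda>m::nat. GREATEST k. k \<le> m \<and> (k = 0 \<or> b k \<le> (real m - real k) * ln 2)"
  shows "\<And>m. kk m \<le> m"
    and "\<And>m. b 0 \<le> real m * ln 2 \<Longrightarrow> b (kk m) \<le> (real m - real (kk m)) * ln 2"
    and "summable (\<lambda>m. (1/2::real)^(kk m))"
proof -
  define P where "P = (\<lambda>m k. k \<le> m \<and> (k = 0 \<or> b k \<le> (real m - real k) * ln 2))"
  have kk: "kk m = Greatest (P m)" for m by (simp add: kk_def P_def)
  have PI: "P m (kk m)" for m
    unfolding kk by (rule GreatestI_nat[of _ 0 m]) (auto simp: P_def)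
  have Pl: "P m k \<Longrightarrow> k \<le> kk m" for m k
    unfolding kk by (rule Greatest_le_nat[of _ _ m]) (auto simp: P_def)
  show le: "kk m \<le> m" for m using PI[of m] by (simp add: P_def)
  show "b 0 \<le> real m * ln 2 \<Longrightarrow> b (kk m) \<le> (real m - real (kk m)) * ln 2" for m
    using PI[of m] by (auto simp: P_def)
  define \<psi> where "\<psi> = (\<lambda>k. real k + 1 + b (k+1) / ln 2)"
  have fib: "real m \<le> \<psi> k" if "kk m = k" for m k
  proof (cases "k = m")
    case True thus ?thesis using b0[of "k+1"] by (simp add: \<psi>_def)
  next
    case False
    hence km: "k + 1 \<le> m" using le[of m] that by simp
    have "\<not> b (k+1) \<le> (real m - real (k+1)) * ln 2"
    proof
      assume "b (k+1) \<le> (real m - real (k+1)) * ln 2"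
      hence "P m (k+1)" using km by (simp add: P_def)
      from Pl[OF this] that show False by simp
    qed
    hence "(real m - real (k+1)) * ln 2 < b (k+1)" by simp
    hence "real m - real (k+1) < b (k+1) / ln 2" by (simp add: pos_less_divide_eq)
    thus ?thesis by (simp add: \<psi>_def)
  qed
  have psi0: "0 \<le> \<psi> k" for k using b0[of "k+1"] by (simp add: \<psi>_def)
  have card: "real (card {m \<in> {..n}. kk m = k}) \<le> \<psi> k + 1" for n k
  proof -
    have "{m \<in> {..n}. kk m = k} \<subseteq> {..nat \<lfloor>\<psi> k\<rfloor>}"
      using fib by (auto simp: le_nat_floor)
    hence "card {m \<in> {..n}. kk m = k} \<le> card {..nat \<lfloor>\<psi> k\<rfloor>}" by (intro card_mono) auto
    hence "real (card {m \<in> {..n}. kk m = k}) \<le> real (nat \<lfloor>\<psi> k\<rfloor>) + 1" by simp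
    also have "\<dots> \<le> \<psi> k + 1" using psi0[of k] by linarith
    finally show ?thesis .
  qed
  have sum_psi: "summable (\<lambda>k. (\<psi> k + 1) * (1/2::real)^k)"
  proof -
    have s1: "summable (\<lambda>k. (1/2::real)^(Suc k) * b (Suc k))"
      using summable_Suc_iff[of "\<lambda>k. (1/2::real)^k * b k"] sb by simp
    have s1': "summable (\<lambda>k. (2 / ln 2) * ((1/2::real)^(Suc k) * b (Suc k)))"
      using summable_mult[OF s1, of "2 / ln 2"] .
    have g: "summable (\<lambda>k. (1/2::real)^k)" by (rule summable_geometric) simp
    have s2: "summable (\<lambda>k. real k * (1/2::real)^k + 2 * (1/2::real)^k)"
      using summable_add[OF summable_n_half summable_mult[OF g, of 2]] .
    have "summable (\<lambda>k. (real k * (1/2::real)^k + 2 * (1/2::real)^k) +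
             (2 / ln 2) * ((1/2::real)^(Suc k) * b (Suc k)))"
      by (rule summable_add[OF s2 s1'])
    moreover have "(real k * (1/2::real)^k + 2 * (1/2::real)^k) +
             (2 / ln 2) * ((1/2::real)^(Suc k) * b (Suc k)) = (\<psi> k + 1) * (1/2::real)^k" for k
      by (simp add: \<psi>_def field_simps)
    ultimately show ?thesis by simp
  qed
  show "summable (\<lambda>m. (1/2::real)^(kk m))"
  proof (rule bounded_imp_summable)
    fix n
    have "(\<Sum>m\<le>n. (1/2::real)^(kk m)) =
        (\<Sum>k\<in>kk ` {..n}. \<Sum>m\<in>{m \<in> {..n}. kk m = k}. (1/2::real)^(kk m))"
      by (rule sum.image_gen) simp
    also have "\<dots> = (\<Sum>k\<in>kk ` {..n}. real (card {m \<in> {..n}. kk m = k}) * (1/2::real)^k)"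
      by (rule sum.cong) auto
    also have "\<dots> \<le> (\<Sum>k\<in>kk ` {..n}. (\<psi> k + 1) * (1/2::real)^k)"
      by (intro sum_mono mult_right_mono card) auto
    also have "\<dots> \<le> (\<Sum>k. (\<psi> k + 1) * (1/2::real)^k)"
      by (rule sum_le_suminf[OF sum_psi]) (auto intro!: mult_nonneg_nonneg psi0 add_nonneg_nonneg)
    finally show "(\<Sum>m\<le>n. (1/2::real)^(kk m)) \<le> (\<Sum>k. (\<psi> k + 1) * (1/2::real)^k)" .
  qed simp
qed


lemma count2:
  fixes r :: "nat \<Rightarrow> real"
  assumes r0: "\<And>j. 0 \<le> r j" and sr: "summable r"
  defines "jj \<equiv> \<lambda>k::nat. LEAST j. r j \<le> (1/2)^k"
  shows "\<And>k. r (jj k) \<le> (1/2)^k"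
    and "summable (\<lambda>k. (1/2::real)^k * real (jj k))"
proof -
  have lim: "r \<longlonglongrightarrow> 0" using sr by (rule summable_LIMSEQ_zero)
  have ex: "\<exists>j. r j \<le> (1/2)^k" for k
  proof -
    have "(0::real) < (1/2)^k" by simp
    from order_tendstoD(2)[OF lim this] obtain j where "r j < (1/2)^k"
      by (auto simp: eventually_sequentially)
    thus ?thesis by (auto intro: less_imp_le)
  qed
  show rj: "r (jj k) \<le> (1/2)^k" for k unfolding jj_def by (rule LeastI_ex[OF ex])
  have lt: "j < jj k \<Longrightarrow> (1/2)^k < r j" for j k
    unfolding jj_def using not_less_Least[of j "\<lambda>j. r j \<le> (1/2)^k"] by force
  show "summable (\<lambda>k. (1/2::real)^k * real (jj k))"
  proof (rule bounded_imp_summable)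
    fix n
    define J where "J = Suc (Max (jj ` {..n}))"
    have jJ: "k \<le> n \<Longrightarrow> jj k < J" for k unfolding J_def
      by (simp add: le_imp_less_Suc)
    have "(\<Sum>k\<le>n. (1/2::real)^k * real (jj k)) = (\<Sum>k\<le>n. \<Sum>j\<in>{j\<in>{..<J}. j < jj k}. (1/2::real)^k)"
    proof (rule sum.cong)
      fix k assume "k \<in> {..n}"
      hence "{j\<in>{..<J}. j < jj k} = {..<jj k}" using jJ[of k] by auto
      thus "(1/2::real)^k * real (jj k) = (\<Sum>j\<in>{j\<in>{..<J}. j < jj k}. (1/2::real)^k)" by simp
    qed simp
    also have "\<dots> = (\<Sum>j\<in>{..<J}. \<Sum>k | k \<in> {..n} \<and> j < jj k. (1/2::real)^k)"
      by (rule sum.swap_restrict) auto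
    also have "\<dots> \<le> (\<Sum>j\<in>{..<J}. 2 * r j)"
      by (intro sum_mono geom_subset) (auto intro: less_imp_le lt r0)
    also have "\<dots> \<le> (\<Sum>j. 2 * r j)"
      by (rule sum_le_suminf) (auto intro: summable_mult sr r0)
    finally show "(\<Sum>k\<le>n. (1/2::real)^k * real (jj k)) \<le> (\<Sum>j. 2 * r j)" .
  qed simp
qed


lemma ex_dyadic:
  fixes x :: real assumes "0 < x" "x \<le> 1"
  shows "\<exists>k. (1/2)^(k+1) < x \<and> x \<le> (1/2)^k"
proof -
  obtain K where K: "(1/2::real)^K < x" using real_arch_pow_inv[OF assms(1), of "1/2"] by auto
  define P where "P = (\<lambda>k. x \<le> (1/2::real)^k)"
  have P0: "P 0" using assms by (simp add: P_def)
  have bnd: "P k \<Longrightarrow> k \<le> K" for k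
  proof (rule ccontr)
    assume "P k" "\<not> k \<le> K"
    hence "K \<le> k" by simp
    hence "(1/2::real)^k \<le> (1/2)^K" by (rule power_decreasing) auto
    thus False using K \<open>P k\<close> unfolding P_def by linarith
  qed
  define k where "k = Greatest P"
  have Pk: "P k" unfolding k_def by (rule GreatestI_nat[of _ 0 K]) (use P0 bnd in auto)
  have "\<not> P (k+1)"
  proof
    assume "P (k+1)"
    hence "k + 1 \<le> k" unfolding k_def by (rule Greatest_le_nat[of _ _ K]) (use bnd in auto)
    thus False by simp
  qed
  hence a: "\<not> x \<le> (1/2::real)^(k+1)" unfolding P_def by blast
  have b: "x \<le> (1/2::real)^k" using Pk unfolding P_def by blast
  show ?thesis proof (intro exI conjI)
    show "(1/2::real)^(k+1) < x" using a by linarith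
  qed (rule b)
qed

locale P2 =
  fixes L :: "nat \<Rightarrow> real" and d :: real
  assumes Lmono: "\<And>n. L n \<le> L (Suc n)"
    and conc: "\<And>n. 1 \<le> n \<Longrightarrow> L (n+1) - L n \<le> L n - L (n-1)"
    and dpos: "0 < d" and Lge: "\<And>n. d * sqrt (real n) \<le> L n"
    and summ: "summable (\<lambda>n. L n / (1 + (real n)^2))"
begin

lemma L0: "0 \<le> L n"
  using Lge[of n] dpos by (meson mult_nonneg_nonneg less_imp_le real_sqrt_ge_zero of_nat_0_le_iff order_trans)

lemma incL: "m \<le> n \<Longrightarrow> L m \<le> L n"
  using Lmono by (rule incseqD[OF incseq_SucI])

definition \<delta> :: "nat \<Rightarrow> real" where "\<delta> n = L (Suc n) - L n"

lemma \<delta>_dec: "\<delta> (Suc n) \<le> \<delta> n"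
  using conc[of "Suc n"] by (simp add: \<delta>_def)

lemma \<delta>_nonneg: "0 \<le> \<delta> n" using Lmono[of n] by (simp add: \<delta>_def)

lemma \<delta>_anti: "m \<le> n \<Longrightarrow> \<delta> n \<le> \<delta> m"
  by (induction n rule: dec_induct) (auto intro: order_trans[OF \<delta>_dec])

lemma \<delta>_mult: "real b * \<delta> b \<le> L b - L 0"
proof (induction b)
  case 0 thus ?case by simp
next
  case (Suc b)
  have "real (Suc b) * \<delta> (Suc b) = real b * \<delta> (Suc b) + \<delta> (Suc b)" by (simp add: algebra_simps)
  also have "\<dots> \<le> real b * \<delta> b + \<delta> b"
    using \<delta>_dec[of b] by (intro add_mono mult_left_mono) auto
  also have "\<dots> \<le> (L b - L 0) + (L (Suc b) - L b)" using Suc \<delta>_def \<delta>_dec[of b] by simp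
  finally show ?case by simp
qed

lemma L_above: "b \<le> n \<Longrightarrow> L n \<le> L b + (real n - real b) * \<delta> b"
proof (induction n rule: dec_induct)
  case base thus ?case by simp
next
  case (step n)
  have "L (Suc n) = L n + \<delta> n" by (simp add: \<delta>_def)
  also have "\<dots> \<le> L b + (real n - real b) * \<delta> b + \<delta> b"
    using step \<delta>_anti[OF step(1)] by simp
  finally show ?case by (simp add: algebra_simps)
qed

definition r :: "nat \<Rightarrow> real" where "r j = L (2^j) / 2^j"

lemma r_nonneg: "0 \<le> r j" by (simp add: r_def L0)

lemma U:
  assumes "r j \<le> \<tau>"
  shows "L n - real n * \<tau> \<le> L (2^j)"
proof (cases "n \<le> 2^j")
  case True
  have "0 \<le> \<tau>" using assms r_nonneg[of j] by linarith
  hence "0 \<le> real n * \<tau>" by simp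
  thus ?thesis using incL[OF True] by linarith
next
  case False
  have dl: "\<delta> (2^j) \<le> r j"
  proof -
    have "real (2^j) * \<delta> (2^j) \<le> L (2^j)" using \<delta>_mult[of "2^j"] L0[of 0] by linarith
    thus ?thesis by (simp add: r_def pos_le_divide_eq mult.commute)
  qed
  have "L n \<le> L (2^j) + (real n - 2^j) * \<delta> (2^j)"
    using L_above[of "2^j" n] False by simp
  also have "(real n - 2^j) * \<delta> (2^j) \<le> real n * \<tau>"
  proof -
    have "(real n - 2^j) * \<delta> (2^j) \<le> real n * \<delta> (2^j)"
      using \<delta>_nonneg by (intro mult_right_mono) auto
    also have "\<dots> \<le> real n * \<tau>" using dl assms by (intro mult_left_mono) auto
    finally show ?thesis .
  qed
  finally show ?thesis by simp
qed

lemma r_block: "(\<Sum>j<J. r j) \<le> 5 * (\<Sum>n<2^J. L n / (1 + (real n)^2))"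
proof (induction J)
  case 0 thus ?case by (simp add: L0)
next
  case (Suc J)
  have blk: "r J \<le> 5 * (\<Sum>n\<in>{2^J..<2^Suc J}. L n / (1 + (real n)^2))"
  proof -
    have lb: "L (2^J) / (5 * 4^J) \<le> L n / (1 + (real n)^2)" if "n \<in> {2^J..<2^Suc J}" for n
    proof -
      have "n < 2 * 2^J" using that by simp
      hence "real n < real (2 * 2^J)" by (simp only: of_nat_less_iff)
      hence n1: "real n < 2 * 2^J" by simp
      have "(real n)^2 \<le> (2 * 2^J)^2" using n1 by (intro power_mono) auto
      hence "(real n)^2 \<le> 4 * 4^J" by (simp add: power_mult_distrib power_mult[symmetric]
          mult.commute[of J] power_mult)
      moreover have "(1::real) \<le> 4^J" by simp
      ultimately have "1 + (real n)^2 \<le> 5 * 4^J" by linarith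
      moreover have "L (2^J) \<le> L n" using that incL by simp
      moreover have "0 < 1 + (real n)^2" by (simp add: add_pos_nonneg)
      ultimately show ?thesis using L0[of "2^J"]
        by (intro frac_le) auto
    qed
    have "real (card {(2::nat)^J..<2^Suc J}) * (L (2^J) / (5 * 4^J)) \<le> (\<Sum>n\<in>{2^J..<2^Suc J}. L n / (1 + (real n)^2))"
      by (rule sum_bounded_below) (rule lb)
    moreover have "card {(2::nat)^J..<2^Suc J} = (2::nat)^J" by simp
    ultimately have "2^J * (L (2^J) / (5 * 4^J)) \<le> (\<Sum>n\<in>{2^J..<2^Suc J}. L n / (1 + (real n)^2))"
      by simp
    moreover have "2^J * (L (2^J) / (5 * 4^J)) = r J / 5"
      by (simp add: r_def power_mult_distrib[symmetric] field_simps)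
    ultimately show ?thesis by simp
  qed
  have "(\<Sum>n<2^Suc J. L n / (1 + (real n)^2)) =
      (\<Sum>n<2^J. L n / (1 + (real n)^2)) + (\<Sum>n\<in>{2^J..<2^Suc J}. L n / (1 + (real n)^2))"
    using sum.atLeastLessThan_concat[of 0 "2^J" "2^Suc J" "\<lambda>n. L n / (1 + (real n)^2)"]
    by (simp add: atLeast0LessThan)
  thus ?case using Suc blk by simp
qed

lemma r_summable: "summable r"
proof (rule bounded_imp_summable)
  show "0 \<le> r n" for n by (rule r_nonneg)
  fix n
  have "(\<Sum>j\<le>n. r j) = (\<Sum>j<Suc n. r j)" by (simp add: lessThan_Suc_atMost)
  also have "\<dots> \<le> 5 * (\<Sum>m<2^Suc n. L m / (1 + (real m)^2))" by (rule r_block)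
  also have "\<dots> \<le> 5 * (\<Sum>m. L m / (1 + (real m)^2))"
    by (intro mult_left_mono sum_le_suminf summ) (auto simp: L0)
  finally show "(\<Sum>j\<le>n. r j) \<le> 5 * (\<Sum>m. L m / (1 + (real m)^2))" .
qed

end

context P2 begin

definition H :: "real \<Rightarrow> real" where "H s = (SUP n. L n - (2 * real n + 1) * s)"

lemma r_lim: "r \<longlonglongrightarrow> 0" using r_summable by (rule summable_LIMSEQ_zero)

lemma ex_r_le: "0 < t \<Longrightarrow> \<exists>j. r j \<le> t"
proof -
  assume "0 < t"
  from order_tendstoD(2)[OF r_lim this] obtain j where "r j < t"
    by (auto simp: eventually_sequentially)
  thus ?thesis by (auto intro: less_imp_le)
qed

lemma term_le:
  assumes "0 < s" "r j \<le> 2 * s"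
  shows "L n - (2 * real n + 1) * s \<le> L (2^j)"
proof -
  have "L n - (2 * real n + 1) * s \<le> L n - real n * (2 * s)" using assms by (simp add: algebra_simps)
  also have "\<dots> \<le> L (2^j)" by (rule U[OF assms(2)])
  finally show ?thesis .
qed

lemma H_bdd: "0 < s \<Longrightarrow> bdd_above (range (\<lambda>n. L n - (2 * real n + 1) * s))"
proof -
  assume s: "0 < s"
  then obtain j where j: "r j \<le> 2 * s" using ex_r_le[of "2 * s"] by auto
  show ?thesis using term_le[OF s j] by (intro bdd_aboveI2) blast
qed

lemma H_ge: "0 < s \<Longrightarrow> L n - (2 * real n + 1) * s \<le> H s"
  unfolding H_def by (rule cSUP_upper[OF _ H_bdd]) auto

lemma H_le: "0 < s \<Longrightarrow> r j \<le> 2 * s \<Longrightarrow> H s \<le> L (2^j)"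
  unfolding H_def by (rule cSUP_least) (auto intro: term_le)

lemma H_anti: "0 < x \<Longrightarrow> x \<le> y \<Longrightarrow> H y \<le> H x"
  unfolding H_def[of y]
proof (rule cSUP_least)
  fix n assume "0 < x" "x \<le> y"
  hence "L n - (2 * real n + 1) * y \<le> L n - (2 * real n + 1) * x"
    by (intro diff_left_mono mult_left_mono) auto
  also have "\<dots> \<le> H x" by (rule H_ge) fact
  finally show "L n - (2 * real n + 1) * y \<le> H x" .
qed simp

lemma H_convex: "convex_on {0<..} H"
  unfolding convex_on_def
proof (intro conjI ballI allI impI)
  show "convex ({0<..} :: real set)" by (rule convex_real_interval)
  fix x y u v :: real
  assume x: "x \<in> {0<..}" and y: "y \<in> {0<..}" and u: "0 \<le> u" and v: "0 \<le> v" and uv: "u + v = 1"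
  have pos: "0 < u * x + v * y"
  proof (cases "u = 0")
    case True thus ?thesis using uv y by simp
  next
    case False thus ?thesis using u v x y by (simp add: add_pos_nonneg)
  qed
  have "H (u * x + v * y) \<le> u * H x + v * H y"
    unfolding H_def[of "u * x + v * y"]
  proof (rule cSUP_least)
    fix n
    have "L n - (2 * real n + 1) * (u * x + v * y) =
        u * (L n - (2 * real n + 1) * x) + v * (L n - (2 * real n + 1) * y)"
    proof -
      have v': "v = 1 - u" using uv by simp
      show ?thesis unfolding v' by (simp add: algebra_simps)
    qed
    also have "\<dots> \<le> u * H x + v * H y"
      using x y by (intro add_mono mult_left_mono H_ge u v) auto
    finally show "L n - (2 * real n + 1) * (u * x + v * y) \<le> u * H x + v * H y" .
  qed simp
  thus "H (u *\<^sub>R x + v *\<^sub>R y) \<le> u * H x + v * H y" by simp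
qed

lemma H_cont: "continuous_on {0<..} H"
  by (rule convex_on_continuous[OF open_greaterThan H_convex])

lemma H_lower:
  assumes s: "0 < s" "s \<le> d / 7"
  shows "d^2 / (16 * s) \<le> H s"
proof -
  define \<alpha> where "\<alpha> = d^2 / 16"
  define n where "n = nat \<lceil>\<alpha> / s^2\<rceil>"
  have a0: "0 < \<alpha>" using dpos by (simp add: \<alpha>_def)
  have n1: "\<alpha> / s^2 \<le> real n" unfolding n_def by linarith
  have n2: "real n \<le> \<alpha> / s^2 + 1" unfolding n_def using a0 s
    by (simp add: of_nat_nat)
  have sq: "sqrt (\<alpha> / s^2) = d / (4 * s)"
  proof (rule real_sqrt_unique)
    show "(d / (4 * s))^2 = \<alpha> / s^2" by (simp add: \<alpha>_def power_divide power_mult_distrib)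
    show "0 \<le> d / (4 * s)" using dpos s by simp
  qed
  have "d / (4 * s) \<le> sqrt (real n)" using n1 sq by (metis real_sqrt_le_mono)
  hence "d * (d / (4 * s)) \<le> d * sqrt (real n)" using dpos by (intro mult_left_mono) auto
  hence A: "d^2 / (4 * s) \<le> L n" using Lge[of n] by (simp add: power2_eq_square)
  have "(2 * real n + 1) * s \<le> (2 * (\<alpha> / s^2 + 1) + 1) * s"
    using n2 s by (intro mult_right_mono) auto
  also have "\<dots> = d^2 / (8 * s) + 3 * s" using s by (simp add: \<alpha>_def field_simps power2_eq_square)
  finally have B: "(2 * real n + 1) * s \<le> d^2 / (8 * s) + 3 * s" .
  have C: "3 * s \<le> d^2 / (16 * s)"
  proof -
    have "7 * s \<le> d" using s by simp
    hence "(7 * s)^2 \<le> d^2" using s by (intro power_mono) auto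
    hence "49 * s^2 \<le> d^2" by (simp add: power_mult_distrib)
    moreover have "0 \<le> s^2" by simp
    ultimately have "48 * s^2 \<le> d^2" by linarith
    hence "3 * s * (16 * s) \<le> d^2" by (simp add: power2_eq_square)
    thus ?thesis using s by (simp add: pos_le_divide_eq)
  qed
  have "d^2 / (4 * s) = d^2 / (8 * s) + d^2 / (8 * s)" by (simp add: field_simps)
  moreover have "d^2 / (8 * s) = d^2 / (16 * s) + d^2 / (16 * s)" by (simp add: field_simps)
  ultimately have "d^2 / (16 * s) \<le> L n - (2 * real n + 1) * s" using A B C by linarith
  also have "\<dots> \<le> H s" by (rule H_ge[OF s(1)])
  finally show ?thesis .
qed

end

context P2 begin

definition G :: "real \<Rightarrow> real" where "G x = (if x \<le> 0 then 0 else exp (- H x))"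

lemma G0: "G 0 = 0" by (simp add: G_def)

lemma G_pos: "0 < x \<Longrightarrow> G x = exp (- H x)" by (simp add: G_def)

lemma G_nonneg: "0 \<le> G x" by (simp add: G_def)

lemma lnG: "0 < x \<Longrightarrow> ln (1 / G x) = H x"
  by (simp add: G_pos exp_minus inverse_eq_divide)

lemma G_mono: "mono_on {0..1} G"
proof (rule mono_onI)
  fix x y :: real assume "x \<in> {0..1}" "y \<in> {0..1}" "x \<le> y"
  show "G x \<le> G y"
  proof (cases "x = 0")
    case True thus ?thesis by (simp add: G0 G_nonneg)
  next
    case False
    hence "0 < x" using \<open>x \<in> {0..1}\<close> by simp
    hence "H y \<le> H x" using H_anti \<open>x \<le> y\<close> by blast
    thus ?thesis using \<open>0 < x\<close> \<open>x \<le> y\<close> by (simp add: G_pos)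
  qed
qed

lemma L_big: "\<exists>n. T < L n"
proof -
  define n where "n = Suc (nat \<lceil>(\<bar>T\<bar> / d)^2\<rceil>)"
  have "(\<bar>T\<bar> / d)^2 < real n" unfolding n_def by linarith
  hence "\<bar>T\<bar> / d < sqrt (real n)" by (rule real_less_rsqrt)
  hence "\<bar>T\<bar> < d * sqrt (real n)" using dpos by (simp add: pos_divide_less_eq mult.commute)
  thus ?thesis using Lge[of n] by (intro exI[of _ n]) linarith
qed

lemma G_bound: "0 < s \<Longrightarrow> G s \<le> exp (- L n) * exp ((2 * real n + 1) * s)"
proof -
  assume s: "0 < s"
  have "- H s \<le> - L n + (2 * real n + 1) * s" using H_ge[OF s, of n] by linarith
  hence "exp (- H s) \<le> exp (- L n + (2 * real n + 1) * s)" by simp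
  also have "\<dots> = exp (- L n) * exp ((2 * real n + 1) * s)" by (rule exp_add)
  finally show ?thesis using s by (simp add: G_pos)
qed

lemma G_cont: "continuous_on {0..1} G"
  unfolding continuous_on_eq_continuous_within
proof
  fix x :: real assume x: "x \<in> {0..1}"
  show "continuous (at x within {0..1}) G"
  proof (cases "x = 0")
    case False
    hence xp: "0 < x" using x by simp
    have "isCont H x" using H_cont continuous_on_eq_continuous_at[OF open_greaterThan] xp by blast
    hence c: "isCont (\<lambda>y. exp (- H y)) x" by (intro continuous_intros)
    have xin: "x \<in> {0<..}" using xp by simp
    have "\<forall>\<^sub>F y in nhds x. G y = exp (- H y)"
      using eventually_nhds_in_open[OF open_greaterThan xin]
      by eventually_elim (simp add: G_pos)
    hence "isCont G x = isCont (\<lambda>y. exp (- H y)) x" by (rule isCont_cong)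
    hence "isCont G x" using c by simp
    thus ?thesis by (rule continuous_at_imp_continuous_within)
  next
    case True
    show ?thesis unfolding True continuous_within_eps_delta
    proof (intro allI impI)
      fix e :: real assume e: "0 < e"
      obtain n where n: "- ln (e / 3) < L n" using L_big by blast
      have en: "exp (- L n) < e / 3"
      proof -
        have "exp (- L n) < exp (ln (e / 3))" using n by simp
        thus ?thesis using e by simp
      qed
      define \<delta> where "\<delta> = 1 / (2 * real n + 1)"
      have \<delta>p: "0 < \<delta>" by (simp add: \<delta>_def)
      show "\<exists>\<delta>>0. \<forall>x'\<in>{0..1}. dist x' 0 < \<delta> \<longrightarrow> dist (G x') (G 0) < e"
      proof (intro exI conjI ballI impI, rule \<delta>p)
        fix y assume y: "y \<in> {0..1::real}" "dist y 0 < \<delta>"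
        show "dist (G y) (G 0) < e"
        proof (cases "y = 0")
          case True thus ?thesis using e by simp
        next
          case False
          hence yp: "0 < y" using y by simp
          have "(2 * real n + 1) * y \<le> 1"
            using y yp by (simp add: \<delta>_def dist_real_def field_simps)
          hence "exp ((2 * real n + 1) * y) \<le> exp 1" by simp
          also have "\<dots> \<le> 3" by (rule exp_le)
          finally have e3: "exp ((2 * real n + 1) * y) \<le> 3" .
          have "G y \<le> exp (- L n) * exp ((2 * real n + 1) * y)" by (rule G_bound[OF yp])
          also have "\<dots> \<le> exp (- L n) * 3" using e3 by (intro mult_left_mono) auto
          also have "\<dots> < e" using en by simp
          finally show ?thesis using G_nonneg[of y] by (simp add: G0 dist_real_def)
        qed
      qed
    qed
  qed
qed

lemma G_liminf: "liminf_cond G"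
proof -
  have ev: "\<forall>\<^sub>F x in at_right 0. ereal (d^2 / 16) \<le> ereal (x * ln (1 / G x))"
    unfolding eventually_at_right_field
  proof (intro exI[of _ "d / 7"] conjI allI impI)
    show "(0::real) < d / 7" using dpos by simp
    fix y :: real assume y: "0 < y" "y < d / 7"
    have "d^2 / (16 * y) \<le> H y" using H_lower[of y] y by simp
    hence "y * (d^2 / (16 * y)) \<le> y * H y" using y by (intro mult_left_mono) auto
    hence "d^2 / 16 \<le> y * H y" using y by simp
    thus "ereal (d^2 / 16) \<le> ereal (y * ln (1 / G y))" using y by (simp add: lnG)
  qed
  have "ereal (d^2 / 16) \<le> Liminf (at_right 0) (\<lambda>x. ereal (x * ln (1 / G x)))"
    by (rule Liminf_bounded[OF ev])
  moreover have "0 < ereal (d^2 / 16)" using dpos by simp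
  ultimately show ?thesis unfolding liminf_cond_def by (rule less_le_trans[rotated])
qed

lemma PG_bound: "P_G G (real (2 * n + 1)) \<le> exp (- L n)"
proof (cases "(\<lambda>r. G (1 - r) * r powr real (2 * n + 1)) integrable_on {0..1}")
  case False thus ?thesis by (simp add: P_G_def not_integrable_integral)
next
  case True
  have "P_G G (real (2 * n + 1)) \<le> integral {0..1} (\<lambda>_::real. exp (- L n))"
    unfolding P_G_def
  proof (rule integral_le[OF True])
    fix r :: real assume r: "r \<in> {0..1}"
    show "G (1 - r) * r powr real (2 * n + 1) \<le> exp (- L n)"
    proof (cases "r = 0 \<or> r = 1")
      case True thus ?thesis by (auto simp: G0)
    next
      case False
      hence r0: "0 < r" and s0: "0 < 1 - r" using r by auto
      have "r \<le> exp (- (1 - r))" using exp_ge_add_one_self[of "-(1 - r)"] by simp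
      hence "r ^ (2 * n + 1) \<le> exp (- (1 - r)) ^ (2 * n + 1)" using r0 by (intro power_mono) auto
      also have "\<dots> = exp (real (2 * n + 1) * (- (1 - r)))" by (rule exp_of_nat_mult[symmetric])
      also have "\<dots> = exp (- ((2 * real n + 1) * (1 - r)))" by (simp add: algebra_simps)
      finally have rp0: "r ^ (2 * n + 1) \<le> exp (- ((2 * real n + 1) * (1 - r)))" .
      have "r powr real (2 * n + 1) = r ^ (2 * n + 1)" using r0 by (rule powr_realpow)
      hence rp: "r powr real (2 * n + 1) \<le> exp (- ((2 * real n + 1) * (1 - r)))" using rp0 by simp
      have "G (1 - r) * r powr real (2 * n + 1) \<le>
          (exp (- L n) * exp ((2 * real n + 1) * (1 - r))) * exp (- ((2 * real n + 1) * (1 - r)))"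
        using G_bound[OF s0, of n] rp G_nonneg by (intro mult_mono) auto
      also have "\<dots> = exp (- L n) * (exp ((2 * real n + 1) * (1 - r)) * exp (- ((2 * real n + 1) * (1 - r))))"
        by (simp only: mult.assoc)
      also have "\<dots> = exp (- L n)" by (simp add: exp_add[symmetric])
      finally show ?thesis .
    qed
  qed (rule integrable_const_ivl)
  also have "\<dots> = exp (- L n)" by simp
  finally show ?thesis .
qed

end

context P2 begin

definition jj :: "nat \<Rightarrow> nat" where "jj = (\<lambda>k. LEAST j. r j \<le> (1/2)^k)"

lemma jj_props: "r (jj k) \<le> (1/2)^k" "summable (\<lambda>k. (1/2::real)^k * real (jj k))"
  using count2[OF r_nonneg r_summable] unfolding jj_def by auto

lemma lnH_le:
  assumes x: "(1/2)^(k+1) < x" "x \<le> (1/2::real)^k" and H1: "0 < H x"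
  shows "ln (H x) \<le> real (jj k) * ln 2"
proof -
  have "(0::real) < (1/2)^(k+1)" by simp
  hence xp: "0 < x" using x(1) by linarith
  have "r (jj k) \<le> 2 * x" using jj_props(1)[of k] x(1) by simp
  hence "H x \<le> L (2 ^ jj k)" by (rule H_le[OF xp])
  also have "L (2 ^ jj k) = 2 ^ jj k * r (jj k)" by (simp add: r_def)
  also have "\<dots> \<le> 2 ^ jj k * 1"
  proof -
    have "(1/2::real)^k \<le> 1" by (rule power_le_one) auto
    hence "r (jj k) \<le> 1" using jj_props(1)[of k] by linarith
    thus ?thesis by (intro mult_left_mono) auto
  qed
  finally have "H x \<le> 2 ^ jj k" by simp
  hence "ln (H x) \<le> ln (2 ^ jj k)" using H1 by simp
  thus ?thesis by (simp add: ln_realpow)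
qed

lemma G_loglog: "loglog_cond G"
proof -
  define d0 where "d0 = min (d / 7) (min (d^2 / 16) 1)"
  have d0p: "0 < d0" using dpos by (simp add: d0_def)
  have H1: "1 \<le> H x" if "x \<in> {0<..d0}" for x
  proof -
    have x: "0 < x" "x \<le> d / 7" "x \<le> d^2 / 16" using that by (auto simp: d0_def)
    have "1 \<le> d^2 / (16 * x)" using x by (simp add: pos_le_divide_eq mult.commute)
    also have "\<dots> \<le> H x" by (rule H_lower) (use x in auto)
    finally show ?thesis .
  qed
  have eq: "ln (ln (1 / G x)) = ln (H x)" if "x \<in> {0<..d0}" for x
    using that by (simp add: lnG)
  have meas: "(\<lambda>x. indicator {0<..d0} x *\<^sub>R ln (ln (1 / G x))) \<in> borel_measurable lborel"
    unfolding measurable_lborel2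
  proof (rule borel_measurable_continuous_on_indicator)
    show "{0<..d0} \<in> sets borel" by simp
    have "continuous_on {0<..d0} (\<lambda>x. ln (H x))"
    proof (rule continuous_on_ln)
      show "continuous_on {0<..d0} H" by (rule continuous_on_subset[OF H_cont]) auto
      show "\<forall>x\<in>{0<..d0}. H x \<noteq> 0" using H1 by fastforce
    qed
    moreover have "continuous_on {0<..d0} (\<lambda>x. ln (ln (1 / G x))) = continuous_on {0<..d0} (\<lambda>x. ln (H x))"
      by (rule continuous_on_cong[OF refl eq])
    ultimately show "continuous_on {0<..d0} (\<lambda>x. ln (ln (1 / G x)))" by simp
  qed
  define I where "I = (\<lambda>k::nat. {(1/2::real)^(k+1)<..(1/2)^k})"
  define c where "c = (\<lambda>k. real (jj k) * ln 2)"
  have c0: "0 \<le> c k" for k by (simp add: c_def)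
  have pw: "ennreal (norm (indicator {0<..d0} x *\<^sub>R ln (ln (1 / G x)))) \<le>
      (\<Sum>k. ennreal (c k) * indicator (I k) x)" for x
  proof (cases "x \<in> {0<..d0}")
    case False thus ?thesis by simp
  next
    case True
    have x01: "0 < x" "x \<le> 1" using True by (auto simp: d0_def)
    obtain k where k: "(1/2)^(k+1) < x" "x \<le> (1/2::real)^k" using ex_dyadic[OF x01] by blast
    have "ln (H x) \<le> c k" unfolding c_def by (rule lnH_le[OF k]) (use H1[OF True] in simp)
    moreover have "0 \<le> ln (H x)" using H1[OF True] by simp
    ultimately have "ennreal (norm (indicator {0<..d0} x *\<^sub>R ln (ln (1 / G x)))) \<le> ennreal (c k) * indicator (I k) x"
      using True k eq[OF True] by (simp add: I_def)
    also have "\<dots> \<le> (\<Sum>k. ennreal (c k) * indicator (I k) x)"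
    proof -
      define f where "f = (\<lambda>i. ennreal (c i) * indicator (I i) x)"
      have "f k = (\<Sum>i\<in>{k}. f i)" by simp
      also have "\<dots> \<le> suminf f" by (rule sum_le_suminf[OF summableI]) auto
      finally show ?thesis by (simp only: f_def)
    qed
    finally show ?thesis .
  qed
  have "(\<integral>\<^sup>+ x. ennreal (norm (indicator {0<..d0} x *\<^sub>R ln (ln (1 / G x)))) \<partial>lborel) \<le>
      (\<integral>\<^sup>+ x. (\<Sum>k. ennreal (c k) * indicator (I k) x) \<partial>lborel)"
    by (rule nn_integral_mono) (rule pw)
  also have "\<dots> = (\<Sum>k. \<integral>\<^sup>+ x. ennreal (c k) * indicator (I k) x \<partial>lborel)"
    by (rule nn_integral_suminf) (simp add: I_def)
  also have "\<dots> = (\<Sum>k. ennreal (c k * (1/2)^(k+1)))"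
  proof (rule suminf_cong)
    fix k
    have "(\<integral>\<^sup>+ x. ennreal (c k) * indicator (I k) x \<partial>lborel) = ennreal (c k) * emeasure lborel (I k)"
      by (rule nn_integral_cmult_indicator) (simp add: I_def)
    also have "emeasure lborel (I k) = ennreal ((1/2)^k - (1/2)^(k+1))"
      unfolding I_def by (rule emeasure_lborel_Ioc) (simp add: power_decreasing)
    also have "(1/2::real)^k - (1/2)^(k+1) = (1/2)^(k+1)" by simp
    also have "ennreal (c k) * ennreal ((1/2::real)^(k+1)) = ennreal (c k * (1/2)^(k+1))"
      by (rule ennreal_mult''[symmetric]) simp
    finally show "(\<integral>\<^sup>+ x. ennreal (c k) * indicator (I k) x \<partial>lborel) = ennreal (c k * (1/2)^(k+1))" .
  qed
  also have "\<dots> = ennreal (\<Sum>k. c k * (1/2)^(k+1))"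
  proof (rule suminf_ennreal2)
    show "0 \<le> c k * (1/2)^(k+1)" for k using c0[of k] by simp
    have eqf: "(\<lambda>k. (ln 2 / 2) * ((1/2::real)^k * real (jj k))) = (\<lambda>k. c k * (1/2)^(k+1))"
      by (rule ext) (simp add: c_def)
    show "summable (\<lambda>k. c k * (1/2)^(k+1))"
      unfolding eqf[symmetric] by (rule summable_mult[OF jj_props(2)])
  qed
  also have "\<dots> < \<infinity>" by simp
  finally have fin: "(\<integral>\<^sup>+ x. ennreal (norm (indicator {0<..d0} x *\<^sub>R ln (ln (1 / G x)))) \<partial>lborel) < \<infinity>" .
  have "set_integrable lborel {0<..d0} (\<lambda>x. ln (ln (1 / G x)))"
    unfolding set_integrable_def integrable_iff_bounded using meas fin by blast
  moreover have "\<forall>x\<in>{0<..d0}. G x < 1"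
  proof
    fix x assume x: "x \<in> {0<..d0}"
    hence "0 < H x" using H1 by fastforce
    thus "G x < 1" using x by (simp add: G_pos)
  qed
  ultimately show ?thesis unfolding loglog_cond_def using d0p by blast
qed

end


lemma weight_ineq:
  fixes a b :: real assumes "0 \<le> b"
  shows "1 + (a + b)^2 \<le> (1 + b)^2 * (1 + a^2)"
proof -
  have "0 \<le> (a - 1/2)^2" by simp
  hence q: "0 \<le> 1 - a + a^2" by (simp add: power2_eq_square algebra_simps)
  have "0 \<le> 2 * b * (1 - a + a^2)" using assms q by simp
  moreover have "0 \<le> b^2 * a^2" by simp
  ultimately have "0 \<le> 2 * b * (1 - a + a^2) + b^2 * a^2" by linarith
  thus ?thesis by (simp add: power2_eq_square algebra_simps)
qed

lemma part2:
  assumes adm: "admissible M"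
  shows "\<exists>G. continuous_on {0..1} G \<and> mono_on {0..1} G \<and> G 0 = 0 \<and>
               liminf_cond G \<and> loglog_cond G \<and>
               (\<forall>\<^sub>F n in sequentially. P_G G (real (2 * n + 1)) \<le> M n)"
proof -
  have pos: "\<And>n. 0 < M n" and dec: "decseq M"
    and cv: "\<forall>\<^sub>F n in sequentially. 2 * ln (M n) \<le> ln (M (n + 1)) + ln (M (n - 1))"
    and dd: "\<exists>d>0. \<forall>\<^sub>F n in sequentially. M n \<le> exp (- d * sqrt (real n))"
    and sm: "summable (\<lambda>n. ln (1 / M n) / (1 + (real n)\<^sup>2))"
    using adm unfolding admissible_def by auto
  obtain N1 where N1: "\<And>n. n \<ge> N1 \<Longrightarrow> 2 * ln (M n) \<le> ln (M (n + 1)) + ln (M (n - 1))"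
    using cv by (auto simp: eventually_sequentially)
  obtain d N2 where d: "0 < d" and N2: "\<And>n. n \<ge> N2 \<Longrightarrow> M n \<le> exp (- d * sqrt (real n))"
    using dd by (auto simp: eventually_sequentially)
  define N where "N = N1 + N2"
  define L where "L = (\<lambda>n. - ln (M (n + N)))"
  have lnM: "ln (1 / M n) = - ln (M n)" for n using pos[of n] by (simp add: ln_div)
  interpret P: P2 L d
  proof
    fix n
    show "L n \<le> L (Suc n)"
      using decseqD[OF dec, of "n + N" "Suc n + N"] pos by (simp add: L_def)
  next
    fix n :: nat assume n: "1 \<le> n"
    have "2 * ln (M (n + N)) \<le> ln (M (n + N + 1)) + ln (M (n + N - 1))"
      by (rule N1) (simp add: N_def)
    moreover have "n + N - 1 = (n - 1) + N" using n by simp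
    ultimately show "L (n + 1) - L n \<le> L n - L (n - 1)" by (simp add: L_def algebra_simps)
  next
    show "0 < d" by (rule d)
  next
    fix n
    have "M (n + N) \<le> exp (- d * sqrt (real (n + N)))" by (rule N2) (simp add: N_def)
    hence "ln (M (n + N)) \<le> ln (exp (- d * sqrt (real (n + N))))"
      using pos by (subst ln_le_cancel_iff) auto
    hence "ln (M (n + N)) \<le> - d * sqrt (real (n + N))" by simp
    moreover have "d * sqrt (real n) \<le> d * sqrt (real (n + N))"
      using d by (intro mult_left_mono) auto
    ultimately show "d * sqrt (real n) \<le> L n" by (simp add: L_def)
  next
    have L0: "0 \<le> L n" for n
    proof -
      have "M (n + N) \<le> exp (- d * sqrt (real (n + N)))" by (rule N2) (simp add: N_def)
      also have "\<dots> \<le> 1" using d by simp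
      finally show ?thesis using pos by (simp add: L_def)
    qed
    have "summable (\<lambda>n. ln (1 / M (n + N)) / (1 + (real (n + N))\<^sup>2))"
      using summable_iff_shift[of "\<lambda>n. ln (1 / M n) / (1 + (real n)\<^sup>2)" N] sm by simp
    hence s1: "summable (\<lambda>n. L n / (1 + (real (n + N))\<^sup>2))" by (simp add: L_def lnM)
    show "summable (\<lambda>n. L n / (1 + (real n)\<^sup>2))"
    proof (rule summable_comparison_test[OF _ summable_mult[OF s1, of "(1 + real N)^2"]])
      show "\<exists>N'. \<forall>n\<ge>N'. norm (L n / (1 + (real n)\<^sup>2)) \<le> (1 + real N)^2 * (L n / (1 + (real (n + N))\<^sup>2))"
      proof (intro exI allI impI)
        fix n :: nat
        have w: "1 + (real n + real N)^2 \<le> (1 + real N)^2 * (1 + (real n)^2)"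
          by (rule weight_ineq) simp
        have p1: "0 < 1 + (real n)^2" by (simp add: add_pos_nonneg)
        have p2: "0 < 1 + (real n + real N)^2" by (simp add: add_pos_nonneg)
        have "L n / (1 + (real n)^2) = ((1 + real N)^2 * L n) / ((1 + real N)^2 * (1 + (real n)^2))"
          by simp
        also have "\<dots> \<le> ((1 + real N)^2 * L n) / (1 + (real n + real N)^2)"
          using w p2 L0[of n] p1 by (intro divide_left_mono mult_pos_pos) auto
        finally show "norm (L n / (1 + (real n)\<^sup>2)) \<le> (1 + real N)^2 * (L n / (1 + (real (n + N))\<^sup>2))"
          using L0[of n] p1 by simp
      qed
    qed
  qed
  show ?thesis
  proof (intro exI conjI)
    show "continuous_on {0..1} P.G" by (rule P.G_cont)
    show "mono_on {0..1} P.G" by (rule P.G_mono)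
    show "P.G 0 = 0" by (rule P.G0)
    show "liminf_cond P.G" by (rule P.G_liminf)
    show "loglog_cond P.G" by (rule P.G_loglog)
    show "\<forall>\<^sub>F n in sequentially. P_G P.G (real (2 * n + 1)) \<le> M n"
    proof (rule always_eventually, rule allI)
      fix n
      have "P_G P.G (real (2 * n + 1)) \<le> exp (- L n)" by (rule P.PG_bound)
      also have "\<dots> = M (n + N)" using pos by (simp add: L_def)
      also have "\<dots> \<le> M n" using decseqD[OF dec, of n "n + N"] by simp
      finally show "P_G P.G (real (2 * n + 1)) \<le> M n" .
    qed
  qed
qed


locale P1 =
  fixes G :: "real \<Rightarrow> real"
  assumes cont: "continuous_on {0..1} G" and mono: "mono_on {0..1} G"
    and nonneg: "\<forall>x\<in>{0..1}. 0 \<le> G x" and pos: "\<forall>x\<in>{0<..1}. 0 < G x"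
    and lim: "liminf_cond G" and ll: "loglog_cond G"
begin

definition F :: "nat \<Rightarrow> real \<Rightarrow> real" where "F k r = G (1 - r) * r ^ k"
definition I :: "nat \<Rightarrow> real" where "I k = integral {0..1} (F k)"

lemma Gmono: "0 \<le> x \<Longrightarrow> x \<le> y \<Longrightarrow> y \<le> 1 \<Longrightarrow> G x \<le> G y"
  using mono by (auto simp: mono_on_def)

lemma F_cont: "continuous_on {0..1} (F k)"
proof -
  have "continuous_on {0..1} (\<lambda>r. G (1 - r))"
    by (rule continuous_on_compose2[OF cont]) (auto intro!: continuous_intros)
  thus ?thesis unfolding F_def by (intro continuous_intros)
qed

lemma F_int: "F k integrable_on {0..1}" by (rule integrable_continuous_real[OF F_cont])

lemma F_int_sub: "0 \<le> a \<Longrightarrow> b \<le> 1 \<Longrightarrow> F k integrable_on {a..b}"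
  by (rule integrable_on_subinterval[OF F_int]) auto

lemma F_nonneg: "r \<in> {0..1} \<Longrightarrow> 0 \<le> F k r"
  using nonneg by (auto simp: F_def)

lemma I_nonneg: "0 \<le> I k"
  unfolding I_def by (rule integral_nonneg[OF F_int]) (rule F_nonneg)

lemma I_lower:
  assumes t: "0 < t" "t \<le> 1/2"
  shows "t * G t * (1 - 2 * t) ^ k \<le> I k"
proof -
  have "integral {1 - 2 * t..1 - t} (\<lambda>_. G t * (1 - 2 * t) ^ k) \<le> integral {1 - 2 * t..1 - t} (F k)"
  proof (rule integral_le)
    show "F k integrable_on {1 - 2 * t..1 - t}" by (rule F_int_sub) (use t in auto)
    fix r assume r: "r \<in> {1 - 2 * t..1 - t}"
    have "G t \<le> G (1 - r)" by (rule Gmono) (use r t in auto)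
    moreover have "(1 - 2 * t) ^ k \<le> r ^ k" by (rule power_mono) (use r t in auto)
    moreover have "0 \<le> G t" using nonneg t by auto
    moreover have "0 \<le> (1 - 2 * t) ^ k" using t by simp
    ultimately show "G t * (1 - 2 * t) ^ k \<le> F k r" unfolding F_def by (intro mult_mono) auto
  qed (rule integrable_const_ivl)
  also have "\<dots> \<le> I k" unfolding I_def
    by (rule integral_subset_le) (use t F_int F_int_sub F_nonneg in auto)
  finally show ?thesis using t by (simp add: ac_simps)
qed

lemma I_pos: "0 < I k"
proof -
  have "0 < (1/4) * G (1/4) * (1 - 2 * (1/4)) ^ k" using pos by simp
  also have "\<dots> \<le> I k" by (rule I_lower) auto
  finally show ?thesis .
qed

lemma I_dec: "I (k + 2) \<le> I k"
  unfolding I_def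
proof (rule integral_le[OF F_int F_int])
  fix r :: real assume r: "r \<in> {0..1}"
  have "r ^ (k + 2) \<le> r ^ k" using r by (intro power_decreasing) auto
  thus "F (k + 2) r \<le> F k r" using nonneg r unfolding F_def by (intro mult_left_mono) auto
qed

lemma I_logconv:
  assumes k: "2 \<le> k"
  shows "(I k)^2 \<le> I (k - 2) * I (k + 2)"
proof -
  define A where "A = I (k - 2)"
  define B where "B = I k"
  define C where "C = I (k + 2)"
  have Ap: "0 < A" by (simp add: A_def I_pos)
  have key: "2 * lam * B \<le> lam^2 * A + C" for lam
  proof -
    have "integral {0..1} (\<lambda>r. 2 * lam * F k r) \<le> integral {0..1} (\<lambda>r. lam^2 * F (k - 2) r + F (k + 2) r)"
    proof (rule integral_le)
      show "(\<lambda>r. 2 * lam * F k r) integrable_on {0..1}" by (intro integrable_on_mult_right F_int)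
      show "(\<lambda>r. lam^2 * F (k - 2) r + F (k + 2) r) integrable_on {0..1}"
        by (intro integrable_add integrable_on_mult_right F_int)
      fix r :: real assume r: "r \<in> {0..1}"
      define j where "j = k - 2"
      have kj: "k = j + 2" using k by (simp add: j_def)
      have e1: "r ^ k = r ^ (k - 2) * r^2" by (simp add: kj power_add power2_eq_square)
      have e2: "r ^ (k + 2) = r ^ (k - 2) * r^2 * r^2" by (simp add: kj power_add power2_eq_square)
      have "0 \<le> r ^ (k - 2) * (lam - r^2)^2" using r by simp
      hence "2 * lam * r ^ k \<le> lam^2 * r ^ (k - 2) + r ^ (k + 2)"
        unfolding e1 e2 by (simp add: power2_eq_square algebra_simps)
      hence "G (1 - r) * (2 * lam * r ^ k) \<le> G (1 - r) * (lam^2 * r ^ (k - 2) + r ^ (k + 2))"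
        using nonneg r by (intro mult_left_mono) auto
      thus "2 * lam * F k r \<le> lam^2 * F (k - 2) r + F (k + 2) r"
        by (simp add: F_def algebra_simps)
    qed
    moreover have "integral {0..1} (\<lambda>r. 2 * lam * F k r) = 2 * lam * B"
      unfolding B_def I_def by (rule integral_mult_right)
    moreover have "integral {0..1} (\<lambda>r. lam^2 * F (k - 2) r + F (k + 2) r) = lam^2 * A + C"
      by (simp add: integral_add integrable_on_mult_right F_int A_def C_def I_def)
    ultimately show ?thesis by linarith
  qed
  have "2 * (B / A) * B \<le> (B / A)^2 * A + C" by (rule key)
  hence "2 * (B^2 / A) \<le> B^2 / A + C" using Ap by (simp add: power2_eq_square field_simps)
  hence "B^2 / A \<le> C" by simp
  hence "B^2 \<le> C * A" using Ap by (simp add: pos_divide_le_eq)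
  thus ?thesis by (simp add: A_def B_def C_def mult.commute)
qed

end


lemma amgm_sqrt:
  fixes c k s :: real assumes "0 < s" "0 \<le> c" "0 \<le> k"
  shows "2 * sqrt (c * k) \<le> c / s + k * s"
proof -
  have "(c / s) * (k * s) = c * k" using assms by simp
  hence "(c / s + k * s)^2 = (c / s - k * s)^2 + 4 * (c * k)" by (simp add: power2_eq_square algebra_simps)
  hence "4 * (c * k) \<le> (c / s + k * s)^2" by simp
  hence "sqrt (4 * (c * k)) \<le> sqrt ((c / s + k * s)^2)" by (rule real_sqrt_le_mono)
  moreover have "sqrt (4 * (c * k)) = 2 * sqrt (c * k)" by (simp add: real_sqrt_mult)
  moreover have "sqrt ((c / s + k * s)^2) = c / s + k * s" using assms by simp
  ultimately show ?thesis by simp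
qed

lemma exp2_ge4: "4 \<le> exp (2::real)"
proof -
  have "2 \<le> exp (1::real)" using exp_ge_add_one_self[of 1] by simp
  hence "2 * 2 \<le> exp (1::real) * exp 1" by (intro mult_mono) auto
  thus ?thesis by (simp add: exp_add[symmetric])
qed

context P1 begin

lemma lim_c: "\<exists>c \<delta>. 0 < c \<and> 0 < \<delta> \<and> \<delta> \<le> 1 \<and> (\<forall>s. 0 < s \<longrightarrow> s < \<delta> \<longrightarrow> G s < exp (- c / s))"
proof -
  have "0 < Liminf (at_right 0) (\<lambda>x. ereal (x * ln (1 / G x)))" using lim by (simp add: liminf_cond_def)
  from ereal_dense2[OF this] obtain c where c: "0 < ereal c" "ereal c < Liminf (at_right 0) (\<lambda>x. ereal (x * ln (1 / G x)))"
    by blast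
  have "\<forall>\<^sub>F x in at_right 0. ereal c < ereal (x * ln (1 / G x))" by (rule less_LiminfD[OF c(2)])
  then obtain b where b: "0 < b" "\<And>y. 0 < y \<Longrightarrow> y < b \<Longrightarrow> ereal c < ereal (y * ln (1 / G y))"
    unfolding eventually_at_right_field by auto
  show ?thesis
  proof (intro exI conjI allI impI)
    show "0 < c" using c by simp
    show "0 < min b 1" using b by simp
    show "min b 1 \<le> 1" by simp
    fix s :: real assume s: "0 < s" "s < min b 1"
    have "c < s * ln (1 / G s)" using b(2)[of s] s by simp
    hence "c / s < ln (1 / G s)" using s by (simp add: pos_divide_less_eq mult.commute)
    moreover have Gp: "0 < G s" using pos s by auto
    ultimately have "ln (G s) < - c / s" by (simp add: ln_div)
    hence "exp (ln (G s)) < exp (- c / s)" by simp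
    thus "G s < exp (- c / s)" using Gp by simp
  qed
qed

end

locale P1c = P1 +
  fixes c \<delta> :: real
  assumes c_pos: "0 < c" and \<delta>_pos: "0 < \<delta>" and \<delta>_le: "\<delta> \<le> 1"
    and Gexp: "\<And>s. 0 < s \<Longrightarrow> s < \<delta> \<Longrightarrow> G s < exp (- c / s)"
begin

lemma G0: "G 0 = 0"
proof (rule ccontr)
  assume "G 0 \<noteq> 0"
  hence g0: "0 < G 0" using nonneg by force
  define s where "s = min (\<delta> / 2) (c / (\<bar>ln (G 0)\<bar> + 1))"
  have sp: "0 < s" using \<delta>_pos c_pos by (simp add: s_def)
  have sd: "s < \<delta>" using \<delta>_pos by (simp add: s_def)
  have "s \<le> c / (\<bar>ln (G 0)\<bar> + 1)" by (simp add: s_def)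
  hence "s * (\<bar>ln (G 0)\<bar> + 1) \<le> c" by (simp add: pos_le_divide_eq)
  hence "\<bar>ln (G 0)\<bar> + 1 \<le> c / s" using sp by (simp add: pos_le_divide_eq mult.commute)
  hence "- c / s < ln (G 0)" by linarith
  hence "exp (- c / s) < exp (ln (G 0))" by simp
  hence "exp (- c / s) < G 0" using g0 by simp
  moreover have "G 0 \<le> G s" by (rule Gmono) (use sp sd \<delta>_le in auto)
  ultimately show False using Gexp[OF sp sd] by simp
qed

lemma F_upper:
  assumes r: "r \<in> {0..1}"
  shows "F k r \<le> exp (- 2 * sqrt (c * real k)) + G 1 * exp (- \<delta> * real k)"
proof -
  define s where "s = 1 - r"
  have s01: "0 \<le> s" "s \<le> 1" using r by (auto simp: s_def)
  have G1: "0 \<le> G 1" using nonneg by auto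
  have e0: "0 \<le> exp (- 2 * sqrt (c * real k))" "0 \<le> G 1 * exp (- \<delta> * real k)" using G1 by auto
  have "r \<le> exp (- s)" using exp_ge_add_one_self[of "-s"] by (simp add: s_def)
  hence "r ^ k \<le> exp (- s) ^ k" using r by (intro power_mono) auto
  also have "\<dots> = exp (- (real k * s))" by (simp add: exp_of_nat_mult[symmetric])
  finally have rk: "r ^ k \<le> exp (- (real k * s))" .
  have F_eq: "F k r = G s * r ^ k" by (simp add: F_def s_def)
  show ?thesis
  proof (cases "s = 0")
    case True thus ?thesis using e0 by (simp add: F_eq G0)
  next
    case False
    hence sp: "0 < s" using s01 by simp
    show ?thesis
    proof (cases "s < \<delta>")
      case True
      have "F k r \<le> exp (- c / s) * exp (- (real k * s))"
        unfolding F_eq using Gexp[OF sp True] rk r pos sp s01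
        by (intro mult_mono) auto
      also have "\<dots> = exp (- (c / s + real k * s))" by (simp add: exp_add[symmetric])
      also have "\<dots> \<le> exp (- 2 * sqrt (c * real k))"
        using amgm_sqrt[OF sp, of c "real k"] c_pos by simp
      finally show ?thesis using e0 by simp
    next
      case False
      have "F k r \<le> G 1 * exp (- (real k * s))"
        unfolding F_eq using rk r G1 s01 nonneg by (intro mult_mono Gmono) auto
      also have "\<dots> \<le> G 1 * exp (- \<delta> * real k)"
      proof -
        have "\<delta> * real k \<le> s * real k" using False by (intro mult_right_mono) auto
        thus ?thesis using G1 by (intro mult_left_mono) (auto simp: mult.commute)
      qed
      finally have "F k r \<le> G 1 * exp (- \<delta> * real k)" .
      moreover have "0 \<le> exp (- 2 * sqrt (c * real k))" by simp
      ultimately show ?thesis by linarith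
    qed
  qed
qed

lemma I_upper: "I k \<le> exp (- 2 * sqrt (c * real k)) + G 1 * exp (- \<delta> * real k)"
proof -
  have "I k \<le> integral {0..1} (\<lambda>_::real. exp (- 2 * sqrt (c * real k)) + G 1 * exp (- \<delta> * real k))"
    unfolding I_def by (rule integral_le[OF F_int integrable_const_ivl]) (rule F_upper)
  thus ?thesis by simp
qed

end

context P1c begin

lemma M_ev: "\<exists>N. \<forall>n\<ge>N. 2 * I (2 * n + 1) \<le> exp (- sqrt c * sqrt (real n))"
proof -
  define a where "a = sqrt c"
  define G1 where "G1 = G 1"
  have ap: "0 < a" using c_pos by (simp add: a_def)
  have G1p: "0 < G1" using pos by (simp add: G1_def)
  define N0 where "N0 = nat \<lceil>max (4 / c) (max ((a / \<delta>)^2) (\<bar>ln (4 * G1)\<bar> / \<delta>))\<rceil>"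
  show ?thesis
  proof (intro exI allI impI)
    fix n assume n: "N0 \<le> n"
    have nN: "max (4 / c) (max ((a / \<delta>)^2) (\<bar>ln (4 * G1)\<bar> / \<delta>)) \<le> real n"
      using n unfolding N0_def by linarith
    hence n1: "4 / c \<le> real n" and n2: "(a / \<delta>)^2 \<le> real n" and n3: "\<bar>ln (4 * G1)\<bar> / \<delta> \<le> real n"
      by auto
    define X where "X = a * sqrt (real n)"
    define k where "k = 2 * n + 1"
    have "sqrt (4 / c) \<le> sqrt (real n)" using n1 by (rule real_sqrt_le_mono)
    moreover have "sqrt (4 / c) = 2 / a" by (simp add: a_def real_sqrt_divide)
    ultimately have "2 / a \<le> sqrt (real n)" by simp
    hence X2: "2 \<le> X" using ap by (simp add: X_def pos_divide_le_eq mult.commute)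
    have "c * real n \<le> c * real k" using c_pos by (simp add: k_def)
    hence "sqrt (c * real n) \<le> sqrt (c * real k)" by (rule real_sqrt_le_mono)
    hence Xk: "X \<le> sqrt (c * real k)" by (simp add: X_def a_def real_sqrt_mult)
    have eX: "4 \<le> exp X" using exp2_ge4 X2 by (meson exp_le_cancel_iff order_trans)
    have A: "4 * exp (- 2 * sqrt (c * real k)) \<le> exp (- X)"
    proof -
      have "exp (- 2 * sqrt (c * real k)) \<le> exp (- X) * exp (- X)"
        using Xk by (simp add: exp_add[symmetric])
      hence "4 * exp (- 2 * sqrt (c * real k)) \<le> exp (- X) * (4 * exp (- X))" by simp
      also have "4 * exp (- X) \<le> 1" using eX by (simp add: exp_minus field_simps)
      hence "exp (- X) * (4 * exp (- X)) \<le> exp (- X) * 1" by (intro mult_left_mono) auto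
      finally show ?thesis by simp
    qed
    have "sqrt ((a / \<delta>)^2) \<le> sqrt (real n)" using n2 by (rule real_sqrt_le_mono)
    hence sq: "a / \<delta> \<le> sqrt (real n)" using ap \<delta>_pos by simp
    have dX: "X \<le> \<delta> * real n"
    proof -
      have "a \<le> \<delta> * sqrt (real n)" using sq \<delta>_pos by (simp add: pos_divide_le_eq mult.commute)
      hence "a * sqrt (real n) \<le> \<delta> * sqrt (real n) * sqrt (real n)" by (intro mult_right_mono) auto
      moreover have "sqrt (real n) * sqrt (real n) = real n" by simp
      ultimately show ?thesis by (simp add: X_def mult.assoc)
    qed
    have dl: "\<bar>ln (4 * G1)\<bar> \<le> \<delta> * real n" using n3 \<delta>_pos by (simp add: pos_divide_le_eq mult.commute)
    have B: "4 * G1 * exp (- \<delta> * real k) \<le> exp (- X)"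
    proof -
      have "4 * G1 * exp (- \<delta> * real k) = exp (ln (4 * G1) - \<delta> * real k)"
        using G1p by (simp add: exp_diff exp_minus field_simps)
      also have "\<dots> \<le> exp (- X)"
      proof -
        have "\<delta> * real k = 2 * (\<delta> * real n) + \<delta>" by (simp add: k_def algebra_simps)
        hence "ln (4 * G1) - \<delta> * real k \<le> - X" using dX dl \<delta>_pos by linarith
        thus ?thesis by simp
      qed
      finally show ?thesis .
    qed
    have "2 * I k \<le> 2 * (exp (- 2 * sqrt (c * real k)) + G 1 * exp (- \<delta> * real k))"
      using I_upper[of k] by simp
    also have "\<dots> \<le> exp (- X)" using A B by (simp add: G1_def)
    finally show "2 * I (2 * n + 1) \<le> exp (- sqrt c * sqrt (real n))" by (simp add: k_def X_def a_def)
  qed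
qed

lemma M_lim: "(\<lambda>n. 2 * I (2 * n + 1)) \<longlonglongrightarrow> 0"
proof -
  obtain N where N: "\<And>n. n \<ge> N \<Longrightarrow> 2 * I (2 * n + 1) \<le> exp (- sqrt c * sqrt (real n))"
    using M_ev by blast
  have "filterlim (\<lambda>n. sqrt (real n)) at_top sequentially"
    by (rule filterlim_compose[OF sqrt_at_top filterlim_real_sequentially])
  hence "filterlim (\<lambda>n. sqrt c * sqrt (real n)) at_top sequentially"
    using c_pos by (intro filterlim_tendsto_pos_mult_at_top[OF tendsto_const]) auto
  hence "filterlim (\<lambda>n. - (sqrt c * sqrt (real n))) at_bot sequentially"
    by (simp add: filterlim_uminus_at_bot)
  hence "((\<lambda>n. exp (- (sqrt c * sqrt (real n)))) \<longlongrightarrow> 0) sequentially"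
    by (rule filterlim_compose[OF exp_at_bot])
  hence lim: "((\<lambda>n. exp (- sqrt c * sqrt (real n))) \<longlongrightarrow> 0) sequentially" by simp
  show ?thesis
  proof (rule tendsto_sandwich[OF _ _ tendsto_const lim])
    show "\<forall>\<^sub>F n in sequentially. 0 \<le> 2 * I (2 * n + 1)" by (simp add: I_nonneg)
    show "\<forall>\<^sub>F n in sequentially. 2 * I (2 * n + 1) \<le> exp (- sqrt c * sqrt (real n))"
      using N by (auto simp: eventually_sequentially)
  qed
qed

end


locale P1d = P1c +
  fixes d1 :: real
  assumes d1_pos: "0 < d1" and G_lt1: "\<And>x. x \<in> {0<..d1} \<Longrightarrow> G x < 1"
    and Gint: "set_integrable lborel {0<..d1} (\<lambda>x. ln (ln (1 / G x)))"
begin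

definition k0 :: nat where "k0 = (SOME k. (1/2::real)^k < min \<delta> (min d1 (min (1/4) c)))"

lemma k0: "(1/2::real)^k0 < min \<delta> (min d1 (min (1/4) c))"
proof -
  have "0 < min \<delta> (min d1 (min (1/4) c))" using \<delta>_pos d1_pos c_pos by simp
  from real_arch_pow_inv[OF this, of "1/2"] have "\<exists>k. (1/2::real)^k < min \<delta> (min d1 (min (1/4) c))" by simp
  thus ?thesis unfolding k0_def by (rule someI_ex)
qed

definition t :: "nat \<Rightarrow> real" where "t k = (1/2)^(k + k0)"

lemma t_pos: "0 < t k" by (simp add: t_def)

lemma t_small: "t k < \<delta>" "t k < d1" "t k < 1/4" "t k < c" "t k \<le> (1/2)^k"
proof -
  have "t k \<le> (1/2)^k0" unfolding t_def by (intro power_decreasing) auto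
  thus "t k < \<delta>" "t k < d1" "t k < 1/4" "t k < c" using k0 by auto
  show "t k \<le> (1/2)^k" unfolding t_def by (intro power_decreasing) auto
qed

definition K :: "real \<Rightarrow> real" where "K s = ln (1 / G s)"

lemma K_ge:
  assumes "0 < s" "s \<le> t 0"
  shows "1 \<le> K s" "c / s < K s"
proof -
  have s: "s < \<delta>" "s < c" "s \<le> 1" using assms t_small[of 0] by auto
  have Gp: "0 < G s" using pos assms s by auto
  have "G s < exp (- c / s)" by (rule Gexp) (use assms s in auto)
  hence "ln (G s) < - c / s" using Gp by (metis ln_exp ln_less_cancel_iff exp_gt_zero)
  thus ks: "c / s < K s" using Gp by (simp add: K_def ln_div)
  have "1 \<le> c / s" using s assms by (simp add: pos_le_divide_eq)
  thus "1 \<le> K s" using ks by simp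
qed

lemma K_anti:
  assumes "0 < x" "x \<le> y" "y \<le> 1"
  shows "K y \<le> K x"
proof -
  have Gx: "0 < G x" using pos assms by auto
  have "G x \<le> G y" by (rule Gmono) (use assms in auto)
  hence "1 / G y \<le> 1 / G x" using Gx by (intro divide_left_mono) auto
  thus ?thesis using Gx \<open>G x \<le> G y\<close> by (simp add: K_def)
qed

definition b :: "nat \<Rightarrow> real" where "b k = ln (K (t k))"

lemma t_le_t0: "t k \<le> t 0" unfolding t_def by (intro power_decreasing) auto

lemma b_nonneg: "0 \<le> b k"
  using K_ge(1)[OF t_pos t_le_t0] by (simp add: b_def)

lemma expb: "exp (b k) = K (t k)"
  using K_ge(1)[OF t_pos t_le_t0, of k] by (simp add: b_def)

lemma b_summable: "summable (\<lambda>k. (1/2)^k * b k)"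
proof -
  define J where "J = (\<lambda>k. {(1/2::real)^(k+k0+1)<..(1/2)^(k+k0)})"
  define f where "f = (\<lambda>x. ln (ln (1 / G x)))"
  have J_sub: "J k \<subseteq> {0<..d1}" for k
  proof -
    have "(1/2::real)^(k+k0) < d1" using t_small(2)[of k] by (simp add: t_def)
    moreover have "(0::real) < (1/2)^(k+k0+1)" by simp
    ultimately show ?thesis by (auto simp: J_def)
  qed
  have J_disj: "k = k'" if "x \<in> J k" "x \<in> J k'" for x k k'
  proof -
    have h1: "(1/2::real)^(k'+k0+1) < (1/2)^(k+k0)" using that by (auto simp: J_def)
    have "(1/2::real)^(k'+k0+1) < (1/2)^(k+k0) \<longleftrightarrow> k+k0 < k'+k0+1"
      by (rule power_strict_decreasing_iff) auto
    hence "k + k0 < k' + k0 + 1" using h1 by blast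
    moreover have h2: "(1/2::real)^(k+k0+1) < (1/2)^(k'+k0)" using that by (auto simp: J_def)
    have "(1/2::real)^(k+k0+1) < (1/2)^(k'+k0) \<longleftrightarrow> k'+k0 < k+k0+1"
      by (rule power_strict_decreasing_iff) auto
    hence "k' + k0 < k + k0 + 1" using h2 by blast
    ultimately show ?thesis by simp
  qed
  have b_le: "b k \<le> f x" if "x \<in> J k" for x k
  proof -
    have x: "0 < x" "x \<le> t k" using that by (auto simp: J_def t_def intro: less_trans[rotated])
    have "K (t k) \<le> K x" by (rule K_anti) (use x t_small(3)[of k] in auto)
    moreover have "1 \<le> K (t k)" by (rule K_ge(1)[OF t_pos t_le_t0])
    ultimately have "ln (K (t k)) \<le> ln (K x)" by simp
    thus ?thesis by (simp add: b_def f_def K_def)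
  qed
  have pw: "(\<Sum>k. ennreal (b k) * indicator (J k) x) \<le> ennreal (norm (indicator {0<..d1} x *\<^sub>R f x))" for x
  proof (cases "\<exists>k. x \<in> J k")
    case False thus ?thesis by simp
  next
    case True
    then obtain k where k: "x \<in> J k" by blast
    have "(\<Sum>i. ennreal (b i) * indicator (J i) x) = (\<Sum>i\<in>{k}. ennreal (b i) * indicator (J i) x)"
    proof (rule suminf_finite)
      fix i assume "i \<notin> {k}"
      hence "x \<notin> J i" using J_disj k by blast
      thus "ennreal (b i) * indicator (J i) x = 0" by simp
    qed simp
    also have "\<dots> = ennreal (b k)" using k by simp
    also have "\<dots> \<le> ennreal (norm (indicator {0<..d1} x *\<^sub>R f x))"
      using b_le[OF k] b_nonneg[of k] J_sub[of k] k by (auto intro!: ennreal_leI)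
    finally show ?thesis .
  qed
  have "(\<Sum>k. ennreal (b k * (1/2)^(k+k0+1))) = (\<Sum>k. \<integral>\<^sup>+ x. ennreal (b k) * indicator (J k) x \<partial>lborel)"
  proof (rule suminf_cong)
    fix k
    have "(\<integral>\<^sup>+ x. ennreal (b k) * indicator (J k) x \<partial>lborel) = ennreal (b k) * emeasure lborel (J k)"
      by (rule nn_integral_cmult_indicator) (simp add: J_def)
    also have "emeasure lborel (J k) = ennreal ((1/2)^(k+k0) - (1/2)^(k+k0+1))"
      unfolding J_def by (rule emeasure_lborel_Ioc) (simp add: power_decreasing)
    also have "(1/2::real)^(k+k0) - (1/2)^(k+k0+1) = (1/2)^(k+k0+1)" by simp
    also have "ennreal (b k) * ennreal ((1/2::real)^(k+k0+1)) = ennreal (b k * (1/2)^(k+k0+1))"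
      by (rule ennreal_mult''[symmetric]) simp
    finally show "ennreal (b k * (1/2)^(k+k0+1)) = (\<integral>\<^sup>+ x. ennreal (b k) * indicator (J k) x \<partial>lborel)" ..
  qed
  also have "\<dots> = (\<integral>\<^sup>+ x. (\<Sum>k. ennreal (b k) * indicator (J k) x) \<partial>lborel)"
    by (rule nn_integral_suminf[symmetric]) (simp add: J_def)
  also have "\<dots> \<le> (\<integral>\<^sup>+ x. ennreal (norm (indicator {0<..d1} x *\<^sub>R f x)) \<partial>lborel)"
    by (rule nn_integral_mono) (rule pw)
  also have "\<dots> < \<infinity>"
    using Gint unfolding set_integrable_def integrable_iff_bounded f_def by blast
  finally have "(\<Sum>k. ennreal (b k * (1/2)^(k+k0+1))) \<noteq> top" by simp
  hence s1: "summable (\<lambda>k. b k * (1/2)^(k+k0+1))"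
    by (rule summable_suminf_not_top[rotated]) (simp add: b_nonneg)
  have eqf: "(\<lambda>k. 2^(k0+1) * (b k * (1/2::real)^(k+k0+1))) = (\<lambda>k. (1/2)^k * b k)"
  proof
    fix k
    have "(2::real)^(k0+1) * (1/2)^(k+k0+1) = (1/2)^k"
      by (simp add: power_add power_one_over)
    thus "2^(k0+1) * (b k * (1/2::real)^(k+k0+1)) = (1/2)^k * b k"
      by (metis mult.assoc mult.commute)
  qed
  show ?thesis unfolding eqf[symmetric] by (rule summable_mult[OF s1])
qed

end

context P1d begin

definition Lb :: "nat \<Rightarrow> real" where "Lb n = ln (1 / (2 * I (2 * n + 1)))"

lemma Lbound: "Lb n \<le> real (k + k0) * ln 2 + exp (b k) + real (2 * n + 1) * (4 * t k)"
proof -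
  define \<tau> where "\<tau> = t k"
  define m where "m = 2 * n + 1"
  have \<tau>p: "0 < \<tau>" and \<tau>4: "\<tau> < 1/4" using t_pos t_small by (auto simp: \<tau>_def)
  have G\<tau>: "0 < G \<tau>" using pos \<tau>p \<tau>4 by auto
  define P where "P = \<tau> * G \<tau> * (1 - 2 * \<tau>) ^ m"
  have Pp: "0 < P" using \<tau>p G\<tau> \<tau>4 by (simp add: P_def)
  have "P \<le> I m" unfolding P_def by (rule I_lower) (use \<tau>p \<tau>4 in auto)
  hence P2: "P \<le> 2 * I m" using I_nonneg[of m] by linarith
  have "Lb n = - ln (2 * I m)" using I_pos[of m] by (simp add: Lb_def m_def ln_div)
  also have "\<dots> \<le> - ln P" using Pp P2 by simp
  finally have e1: "Lb n \<le> - ln P" .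
  have e2: "ln P = ln \<tau> + ln (G \<tau>) + ln ((1 - 2 * \<tau>) ^ m)"
    using \<tau>p G\<tau> \<tau>4 by (simp add: P_def ln_mult)
  have e2': "ln ((1 - 2 * \<tau>) ^ m) = real m * ln (1 - 2 * \<tau>)" by (rule ln_realpow)
  have e3: "ln \<tau> = - (real (k + k0) * ln 2)"
    by (simp add: \<tau>_def t_def ln_realpow ln_div)
  have e4: "- ln (G \<tau>) = exp (b k)" using expb[of k] G\<tau> by (simp add: K_def \<tau>_def ln_div)
  have e5: "- (real m * ln (1 - 2 * \<tau>)) \<le> real m * (4 * \<tau>)"
  proof -
    have "- (2 * \<tau>) - 2 * (2 * \<tau>)^2 \<le> ln (1 - 2 * \<tau>)"
      by (rule ln_one_minus_pos_lower_bound) (use \<tau>p \<tau>4 in auto)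
    moreover have "2 * (2 * \<tau>)^2 \<le> 2 * \<tau>" using \<tau>p \<tau>4 by (simp add: power2_eq_square)
    ultimately have "- (4 * \<tau>) \<le> ln (1 - 2 * \<tau>)" by linarith
    hence "real m * (- (4 * \<tau>)) \<le> real m * ln (1 - 2 * \<tau>)" by (intro mult_left_mono) auto
    thus ?thesis by simp
  qed
  show ?thesis unfolding m_def[symmetric] \<tau>_def[symmetric] using e1 e2 e2' e3 e4 e5 by linarith
qed

definition kk :: "nat \<Rightarrow> nat" where
  "kk = (\<lambda>m::nat. GREATEST k. k \<le> m \<and> (k = 0 \<or> b k \<le> (real m - real k) * ln 2))"

lemma kk_props: "kk m \<le> m" "b 0 \<le> real m * ln 2 \<Longrightarrow> b (kk m) \<le> (real m - real (kk m)) * ln 2"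
  "summable (\<lambda>m. (1/2::real)^(kk m))"
  using count1[OF b_nonneg b_summable] unfolding kk_def by auto

lemma Lblock:
  assumes m: "b 0 \<le> real m * ln 2" and n: "n < 2^(m+1)"
  shows "Lb n \<le> real m + real k0 + 17 * (2^m * (1/2)^(kk m))"
proof -
  define k where "k = kk m"
  have km: "k \<le> m" and bk: "b k \<le> (real m - real k) * ln 2" using kk_props m by (auto simp: k_def)
  have "exp (b k) \<le> exp ((real m - real k) * ln 2)" using bk by simp
  also have "(real m - real k) * ln 2 = real m * ln 2 - real k * ln 2" by (simp add: algebra_simps)
  also have "exp (real m * ln 2 - real k * ln 2) = exp (real m * ln 2) / exp (real k * ln 2)"
    by (rule exp_diff)
  also have "exp (real m * ln 2) = 2^m" by (subst exp_of_nat_mult) simp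
  also have "exp (real k * ln 2) = 2^k" by (subst exp_of_nat_mult) simp
  also have "(2::real)^m / 2^k = 2^m * (1/2)^k" by (simp add: power_divide)
  finally have e: "exp (b k) \<le> 2^m * (1/2)^k" .
  have l2: "ln (2::real) \<le> 1" using ln_le_minus_one[of 2] by simp
  have "real (k + k0) * ln 2 \<le> real (k + k0) * 1" by (intro mult_left_mono l2) auto
  hence a: "real (k + k0) * ln 2 \<le> real m + real k0" using km by simp
  have "real (2 * n + 1) \<le> 4 * 2^m"
  proof -
    have "2 * n + 1 < 2 * 2^(m+1)" using n by simp
    hence "2 * n + 1 \<le> 4 * 2^m" by simp
    hence "real (2 * n + 1) \<le> real (4 * 2^m)" by (simp only: of_nat_le_iff)
    thus ?thesis by simp
  qed
  moreover have "4 * t k \<le> 4 * (1/2)^k" using t_small(5)[of k] by simp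
  ultimately have "real (2 * n + 1) * (4 * t k) \<le> (4 * 2^m) * (4 * (1/2)^k)"
    using t_pos[of k] by (intro mult_mono) auto
  hence c: "real (2 * n + 1) * (4 * t k) \<le> 16 * (2^m * (1/2)^k)" by simp
  have "Lb n \<le> real (k + k0) * ln 2 + exp (b k) + real (2 * n + 1) * (4 * t k)" by (rule Lbound)
  also have "\<dots> \<le> real m + real k0 + 17 * (2^m * (1/2)^k)" using a e c by linarith
  finally show ?thesis by (simp add: k_def)
qed

end

context P1d begin

definition fp :: "nat \<Rightarrow> real" where "fp n = max 0 (Lb n / (1 + (real n)^2))"

definition \<beta> :: "nat \<Rightarrow> real" where "\<beta> m = (real m + real k0) * (1/2)^m + 17 * (1/2)^(kk m)"

lemma \<beta>_nonneg: "0 \<le> \<beta> m" by (simp add: \<beta>_def)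

lemma \<beta>_summable: "summable \<beta>"
proof -
  have g: "summable (\<lambda>m. (1/2::real)^m)" by (rule summable_geometric) simp
  have "summable (\<lambda>m. (real m * (1/2)^m + real k0 * (1/2::real)^m) + 17 * (1/2)^(kk m))"
    by (intro summable_add summable_n_half summable_mult g kk_props(3))
  moreover have "(\<lambda>m. (real m * (1/2)^m + real k0 * (1/2::real)^m) + 17 * (1/2)^(kk m)) = \<beta>"
    by (rule ext) (simp add: \<beta>_def algebra_simps)
  ultimately show ?thesis by simp
qed

definition m1 :: nat where "m1 = nat \<lceil>b 0 / ln 2\<rceil>"

lemma m1: "m1 \<le> m \<Longrightarrow> b 0 \<le> real m * ln 2"
proof -
  assume "m1 \<le> m"
  hence "b 0 / ln 2 \<le> real m" unfolding m1_def by linarith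
  thus ?thesis by (simp add: pos_divide_le_eq)
qed

lemma block:
  assumes "m1 \<le> m"
  shows "(\<Sum>n\<in>{2^m..<2^(m+1)}. fp n) \<le> \<beta> m"
proof -
  define B where "B = real m + real k0 + 17 * (2^m * (1/2)^(kk m))"
  have B0: "0 \<le> B" by (simp add: B_def)
  have each: "fp n \<le> B / 4^m" if n: "n \<in> {2^m..<2^(m+1)}" for n
  proof -
    have Lb: "Lb n \<le> B" unfolding B_def by (rule Lblock[OF m1[OF assms]]) (use n in auto)
    have p: "0 < 1 + (real n)^2" by (simp add: add_pos_nonneg)
    have "(2::nat)^m \<le> n" using n by simp
    hence "real (2^m) \<le> real n" by (simp only: of_nat_le_iff)
    hence "(2::real)^m \<le> real n" by simp
    hence "((2::real)^m)^2 \<le> (real n)^2" by (intro power_mono) auto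
    hence "(4::real)^m \<le> 1 + (real n)^2" by (simp add: power_mult[symmetric] mult.commute[of m] power_mult)
    hence "B / (1 + (real n)^2) \<le> B / 4^m" using B0 p by (intro divide_left_mono mult_pos_pos) auto
    moreover have "Lb n / (1 + (real n)^2) \<le> B / (1 + (real n)^2)" using Lb p by (intro divide_right_mono) auto
    moreover have "0 \<le> B / 4^m" using B0 by simp
    ultimately show ?thesis unfolding fp_def by linarith
  qed
  have "(\<Sum>n\<in>{2^m..<2^(m+1)}. fp n) \<le> real (card {(2::nat)^m..<2^(m+1)}) * (B / 4^m)"
    by (rule sum_bounded_above) (rule each)
  also have "real (card {(2::nat)^m..<2^(m+1)}) = 2^m" by simp
  also have "(2::real)^m * (B / 4^m) = B * (1/2)^m"
    by (simp add: power_mult_distrib[symmetric] field_simps power_divide)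
  also have "B * (1/2)^m = \<beta> m"
  proof -
    have "(2::real)^m * (1/2)^m = 1" by (simp add: power_mult_distrib[symmetric])
    have "17 * (2^m * (1/2)^(kk m)) * (1/2::real)^m = 17 * (1/2)^(kk m) * (2^m * (1/2)^m)"
      by (simp only: mult_ac)
    also have "\<dots> = 17 * (1/2)^(kk m)" using \<open>(2::real)^m * (1/2)^m = 1\<close> by simp
    finally have "17 * (2^m * (1/2)^(kk m)) * (1/2::real)^m = 17 * (1/2)^(kk m)" .
    thus ?thesis unfolding B_def \<beta>_def by (simp add: distrib_right)
  qed
  finally show ?thesis .
qed

lemma fp_nonneg: "0 \<le> fp n" by (simp add: fp_def)

lemma S_bound: "m1 \<le> M \<Longrightarrow> (\<Sum>n<2^M. fp n) \<le> (\<Sum>n<2^m1. fp n) + (\<Sum>m\<in>{m1..<M}. \<beta> m)"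
proof (induction M rule: dec_induct)
  case base thus ?case by simp
next
  case (step M)
  have "(\<Sum>n<2^(M+1). fp n) = (\<Sum>n<2^M. fp n) + (\<Sum>n\<in>{2^M..<2^(M+1)}. fp n)"
    using sum.atLeastLessThan_concat[of 0 "2^M" "2^(M+1)" fp] by (simp add: atLeast0LessThan)
  also have "\<dots> \<le> ((\<Sum>n<2^m1. fp n) + (\<Sum>m\<in>{m1..<M}. \<beta> m)) + \<beta> M"
    using step block[of M] by (intro add_mono) auto
  also have "\<dots> = (\<Sum>n<2^m1. fp n) + (\<Sum>m\<in>{m1..<Suc M}. \<beta> m)" using step(1) by simp
  finally show ?case by simp
qed

lemma fp_summable: "summable fp"
proof (rule bounded_imp_summable)
  show "0 \<le> fp n" for n by (rule fp_nonneg)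
  fix N
  define M where "M = N + m1 + 1"
  have "N < 2^N" by (rule less_exp)
  also have "(2::nat)^N \<le> 2^M" by (rule power_increasing) (auto simp: M_def)
  finally have "N < 2^M" .
  hence "(\<Sum>n\<le>N. fp n) \<le> (\<Sum>n<2^M. fp n)" by (intro sum_mono2) (auto simp: fp_nonneg)
  also have "\<dots> \<le> (\<Sum>n<2^m1. fp n) + (\<Sum>m\<in>{m1..<M}. \<beta> m)" by (rule S_bound) (simp add: M_def)
  also have "(\<Sum>m\<in>{m1..<M}. \<beta> m) \<le> suminf \<beta>"
    by (rule sum_le_suminf[OF \<beta>_summable]) (auto simp: \<beta>_nonneg)
  finally show "(\<Sum>n\<le>N. fp n) \<le> (\<Sum>n<2^m1. fp n) + suminf \<beta>" by simp
qed

lemma Lb_summable: "summable (\<lambda>n. Lb n / (1 + (real n)^2))"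
proof (rule summable_comparison_test[OF _ fp_summable])
  have "\<forall>\<^sub>F n in sequentially. 2 * I (2 * n + 1) < 1"
    using order_tendstoD(2)[OF M_lim, of 1] by simp
  then obtain N where N: "\<And>n. n \<ge> N \<Longrightarrow> 2 * I (2 * n + 1) < 1" by (auto simp: eventually_sequentially)
  show "\<exists>N. \<forall>n\<ge>N. norm (Lb n / (1 + (real n)^2)) \<le> fp n"
  proof (intro exI allI impI)
    fix n assume "N \<le> n"
    hence lt: "2 * I (2 * n + 1) < 1" by (rule N)
    have "0 < 2 * I (2 * n + 1)" using I_pos by simp
    hence "1 \<le> 1 / (2 * I (2 * n + 1))" using lt by simp
    hence "0 \<le> Lb n" by (simp add: Lb_def)
    hence "0 \<le> Lb n / (1 + (real n)^2)" by simp
    thus "norm (Lb n / (1 + (real n)^2)) \<le> fp n" by (simp add: fp_def)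
  qed
qed

end


lemma part1:
  fixes G :: "real \<Rightarrow> real"
  assumes A: "continuous_on {0..1} G \<and> mono_on {0..1} G \<and>
            (\<forall>x\<in>{0..1}. G x \<ge> 0) \<and> (\<forall>x\<in>{0<..1}. G x > 0) \<and>
            liminf_cond G \<and> loglog_cond G"
  shows "admissible (\<lambda>n. 2 * integral {0..1} (\<lambda>r. G (1 - r) * r ^ (2 * n + 1)))"
proof -
  interpret P1 G using A by unfold_locales auto
  obtain c \<delta> where cd: "0 < c" "0 < \<delta>" "\<delta> \<le> 1" "\<And>s. 0 < s \<Longrightarrow> s < \<delta> \<Longrightarrow> G s < exp (- c / s)"
    using lim_c by blast
  interpret P1c G c \<delta> using cd by unfold_locales auto
  obtain d1 where d1: "0 < d1" "\<forall>x\<in>{0<..d1}. G x < 1"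
    "set_integrable lborel {0<..d1} (\<lambda>x. ln (ln (1 / G x)))"
    using ll unfolding loglog_cond_def by blast
  interpret P1d G c \<delta> d1 using d1 by unfold_locales auto
  have MI: "(\<lambda>n. 2 * integral {0..1} (\<lambda>r. G (1 - r) * r ^ (2 * n + 1))) = (\<lambda>n. 2 * I (2 * n + 1))"
    by (simp add: I_def F_def[abs_def])
  show ?thesis unfolding MI admissible_def
  proof (intro conjI allI)
    show "0 < 2 * I (2 * n + 1)" for n using I_pos by simp
    show "decseq (\<lambda>n. 2 * I (2 * n + 1))"
    proof (rule decseq_SucI)
      fix n
      have "I ((2 * n + 1) + 2) \<le> I (2 * n + 1)" by (rule I_dec)
      thus "2 * I (2 * Suc n + 1) \<le> 2 * I (2 * n + 1)" by (simp add: algebra_simps)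
    qed
    show "(\<lambda>n. 2 * I (2 * n + 1)) \<longlonglongrightarrow> 0" by (rule M_lim)
    show "\<forall>\<^sub>F n in sequentially. 2 * ln (2 * I (2 * n + 1)) \<le>
        ln (2 * I (2 * (n + 1) + 1)) + ln (2 * I (2 * (n - 1) + 1))"
      unfolding eventually_sequentially
    proof (intro exI allI impI)
      fix n :: nat assume n: "1 \<le> n"
      define k where "k = 2 * n + 1"
      have k2: "2 \<le> k" using n by (simp add: k_def)
      have e1: "k - 2 = 2 * (n - 1) + 1" using n by (simp add: k_def)
      have e2: "k + 2 = 2 * (n + 1) + 1" by (simp add: k_def)
      have "(I k)^2 \<le> I (k - 2) * I (k + 2)" by (rule I_logconv[OF k2])
      hence "(2 * I k)^2 \<le> (2 * I (k - 2)) * (2 * I (k + 2))" by (simp add: power2_eq_square)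
      hence "ln ((2 * I k)^2) \<le> ln ((2 * I (k - 2)) * (2 * I (k + 2)))"
      proof (subst ln_le_cancel_iff)
        show "0 < (2 * I k)^2" using I_pos[of k] by simp
        show "0 < (2 * I (k - 2)) * (2 * I (k + 2))" using I_pos[of "k - 2"] I_pos[of "k + 2"] by simp
      qed simp
      moreover have "ln ((2 * I k)^2) = 2 * ln (2 * I k)" by (subst ln_realpow) simp
      moreover have "ln ((2 * I (k - 2)) * (2 * I (k + 2))) = ln (2 * I (k - 2)) + ln (2 * I (k + 2))"
        using I_pos[of "k - 2"] I_pos[of "k + 2"] by (intro ln_mult_pos) auto
      ultimately have "2 * ln (2 * I k) \<le> ln (2 * I (k - 2)) + ln (2 * I (k + 2))" by linarith
      thus "2 * ln (2 * I (2 * n + 1)) \<le> ln (2 * I (2 * (n + 1) + 1)) + ln (2 * I (2 * (n - 1) + 1))"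
        unfolding e1[symmetric] e2[symmetric] k_def by simp
    qed
    show "\<exists>d>0. \<forall>\<^sub>F n in sequentially. 2 * I (2 * n + 1) \<le> exp (- d * sqrt (real n))"
    proof (intro exI conjI)
      show "0 < sqrt c" using c_pos by simp
      show "\<forall>\<^sub>F n in sequentially. 2 * I (2 * n + 1) \<le> exp (- sqrt c * sqrt (real n))"
        using M_ev unfolding eventually_sequentially by blast
    qed
    show "summable (\<lambda>n. ln (1 / (2 * I (2 * n + 1))) / (1 + (real n)\<^sup>2))"
      using Lb_summable by (simp add: Lb_def)
  qed
qed


theorem mainTheorem13:
  shows "(\<forall>G :: real \<Rightarrow> real.
            continuous_on {0..1} G \<and> mono_on {0..1} G \<and>
            (\<forall>x\<in>{0..1}. G x \<ge> 0) \<and> (\<forall>x\<in>{0<..1}. G x > 0) \<and>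
            liminf_cond G \<and> loglog_cond G
          \<longrightarrow> admissible (\<lambda>n. 2 * integral {0..1} (\<lambda>r. G (1 - r) * r ^ (2 * n + 1))))
       \<and>
         (\<forall>M :: nat \<Rightarrow> real. admissible M \<longrightarrow>
            (\<exists>G :: real \<Rightarrow> real.
               continuous_on {0..1} G \<and> mono_on {0..1} G \<and> G 0 = 0 \<and>
               liminf_cond G \<and> loglog_cond G \<and>
               (\<forall>\<^sub>F n in sequentially. P_G G (real (2 * n + 1)) \<le> M n)))"
  using part1 part2 by blast

end
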